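(* For $t>0$ let $$P(t)=\frac{e^{2 t} (t^3-12 t^2+54 t-86)-e^t (t^3-12 t^2+16 t-160)-26 t-74}{e^t-1},\qquad Q(t)=2e^{2t}-e^t (t^2-6 t+18)+8(t+2).$$ Then $Q(t)>0$ for all $t>0$, the function $P(t)/Q(t)$ is strictly decreasing on $(0,\infty)$, and $$\lim_{t\to0^+}\frac{P(t)}{Q(t)}=1,\qquad \lim_{t\to\infty}\frac{P(t)}{Q(t)}=0.$$ *)

theory Defs
  imports "HOL-Analysis.Analysis"
begin

definition P :: "real \<Rightarrow> real" where
  "P t = (exp (2*t) * (t^3 - 12*t^2 + 54*t - 86) - exp t * (t^3 - 12*t^2 + 16*t - 160)
          - 26*t - 74) / (exp t - 1)"

definition Q :: "real \<Rightarrow> real" where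
  "Q t = 2 * exp (2*t) - exp t * (t^2 - 6*t + 18) + 8*(t + 2)"

end

theory Submission imports Defs "HOL-Real_Asymp.Real_Asymp" begin

type_synonym ep = "(real \<times> real list) list"

fun pe :: "real list \<Rightarrow> real \<Rightarrow> real" where
  "pe [] t = 0" | "pe (c#cs) t = c + t * pe cs t"

fun padd :: "real list \<Rightarrow> real list \<Rightarrow> real list" where
  "padd [] ys = ys" | "padd xs [] = xs" | "padd (x#xs) (y#ys) = (x+y) # padd xs ys"

definition psc :: "real \<Rightarrow> real list \<Rightarrow> real list" where
  "psc c xs = map (\<lambda>x. c * x) xs"

fun pdx :: "real \<Rightarrow> real list \<Rightarrow> real list" where
  "pdx n [] = []" | "pdx n (c#cs) = (n*c) # pdx (n+1) cs"

fun pd :: "real list \<Rightarrow> real list" where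
  "pd [] = []" | "pd (c#cs) = pdx 1 cs"

fun pmul :: "real list \<Rightarrow> real list \<Rightarrow> real list" where
  "pmul [] ys = []" | "pmul (x#xs) ys = padd (psc x ys) (0 # pmul xs ys)"

lemma pe_padd[simp]: "pe (padd xs ys) t = pe xs t + pe ys t"
  by (induction xs ys rule: padd.induct) (auto simp: algebra_simps)

lemma pe_psc[simp]: "pe (psc c xs) t = c * pe xs t"
  by (induction xs) (auto simp: psc_def algebra_simps)

lemma pe_pmul[simp]: "pe (pmul xs ys) t = pe xs t * pe ys t"
  by (induction xs) (auto simp: algebra_simps)

lemma pe_pdx: "pe (pdx n cs) t = n * pe cs t + t * pe (pd cs) t"
proof (induction cs arbitrary: n)
  case Nil then show ?case by simp
next
  case (Cons c cs)
  have "pe (pdx n (c#cs)) t = n*c + t * pe (pdx (n+1) cs) t" by simp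
  also have "\<dots> = n*c + t * ((n+1) * pe cs t + t * pe (pd cs) t)" using Cons by simp
  also have "pe (pd (c#cs)) t = pe cs t + t * pe (pd cs) t" using Cons[of 1] by simp
  ultimately show ?case by (simp add: algebra_simps)
qed

lemma pe_deriv: "(pe cs has_real_derivative pe (pd cs) t) (at t)"
proof (induction cs)
  case Nil then show ?case by simp
next
  case (Cons c cs)
  have "((\<lambda>t. c + t * pe cs t) has_real_derivative (0 + (1 * pe cs t + pe (pd cs) t * t))) (at t)"
    by (intro DERIV_add DERIV_const DERIV_mult DERIV_ident Cons)
  moreover have "pe (pd (c#cs)) t = pe cs t + t * pe (pd cs) t" using pe_pdx[of 1 cs t] by simp
  ultimately show ?case by (simp add: algebra_simps)
qed

fun ee :: "ep \<Rightarrow> real \<Rightarrow> real" where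
  "ee [] t = 0" | "ee ((k,p)#fs) t = exp (k*t) * pe p t + ee fs t"

fun ed :: "ep \<Rightarrow> ep" where
  "ed [] = []" | "ed ((k,p)#fs) = (k, padd (psc k p) (pd p)) # ed fs"

lemma ee_deriv: "(ee fs has_real_derivative ee (ed fs) t) (at t)"
proof (induction fs rule: ed.induct)
  case 1 then show ?case by simp
next
  case (2 k p fs)
  have e: "((\<lambda>t. exp(k*t)) has_real_derivative exp(k*t)*k) (at t)"
    by (auto intro!: derivative_eq_intros)
  have "((\<lambda>t. exp (k*t) * pe p t + ee fs t) has_real_derivative
      (exp(k*t)*k * pe p t + pe (pd p) t * exp(k*t)) + ee (ed fs) t) (at t)"
    by (intro DERIV_add DERIV_mult e pe_deriv 2)
  then show ?case by (simp add: algebra_simps)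
qed

lemma ee_Cons[simp]: "ee (a#fs) t = exp (fst a*t) * pe (snd a) t + ee fs t"
  by (cases a) simp

lemma ee_append[simp]: "ee (fs @ gs) t = ee fs t + ee gs t"
  by (induction fs) auto

definition emul1 :: "real \<Rightarrow> real list \<Rightarrow> ep \<Rightarrow> ep" where
  "emul1 k p gs = map (\<lambda>(l,q). (k+l, pmul p q)) gs"

lemma ee_emul1[simp]: "ee (emul1 k p gs) t = exp (k*t) * pe p t * ee gs t"
  unfolding emul1_def by (induction gs) (auto simp: algebra_simps exp_add)

fun emul :: "ep \<Rightarrow> ep \<Rightarrow> ep" where
  "emul [] gs = []" | "emul ((k,p)#fs) gs = emul1 k p gs @ emul fs gs"

lemma ee_emul[simp]: "ee (emul fs gs) t = ee fs t * ee gs t"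
  by (induction fs gs rule: emul.induct) (auto simp: algebra_simps)

definition eneg :: "ep \<Rightarrow> ep" where "eneg fs = map (\<lambda>(k,p). (k, psc (-1) p)) fs"

lemma ee_eneg[simp]: "ee (eneg fs) t = - ee fs t"
  unfolding eneg_def by (induction fs) auto

fun ins :: "real \<times> real list \<Rightarrow> ep \<Rightarrow> ep" where
  "ins kp [] = [kp]"
| "ins (k,p) ((l,q)#fs) = (if k = l then (k, padd p q) # fs else (l,q) # ins (k,p) fs)"

lemma ee_ins[simp]: "ee (ins (k,p) fs) t = exp (k*t) * pe p t + ee fs t"
  by (induction "(k,p)" fs rule: ins.induct) (auto simp: algebra_simps)

fun norm :: "ep \<Rightarrow> ep" where
  "norm [] = []" | "norm ((k,p)#fs) = ins (k,p) (norm fs)"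

lemma ee_norm[simp]: "ee (norm fs) t = ee fs t"
  by (induction fs rule: norm.induct) auto

definition sh :: "real \<Rightarrow> ep \<Rightarrow> ep" where "sh c fs = map (\<lambda>(k,p). (k - c, p)) fs"

lemma ee_sh[simp]: "ee (sh c fs) t = exp (-(c*t)) * ee fs t"
  unfolding sh_def by (induction fs) (auto simp: algebra_simps exp_diff exp_minus field_simps)

definition allnn :: "ep \<Rightarrow> bool" where
  "allnn fs = list_all (\<lambda>(k,p). list_all (\<lambda>c. 0 \<le> c) p) fs"

lemma pe_nonneg: "list_all (\<lambda>c. 0 \<le> c) p \<Longrightarrow> 0 \<le> t \<Longrightarrow> 0 \<le> pe p t"
  by (induction p) auto

lemma pe_ge0: "list_all (\<lambda>c. 0 \<le> c) p \<Longrightarrow> 0 \<le> t \<Longrightarrow> pe p 0 \<le> pe p t"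
  by (cases p) (auto intro!: pe_nonneg mult_nonneg_nonneg)

lemma exp_pe_nonneg: "list_all (\<lambda>c. 0 \<le> c) p \<Longrightarrow> 0 \<le> t \<Longrightarrow> 0 \<le> exp (k*t) * pe p t"
  by (simp add: pe_nonneg)

lemma ee_nonneg: "allnn fs \<Longrightarrow> 0 \<le> t \<Longrightarrow> 0 \<le> ee fs t"
  unfolding allnn_def by (induction fs) (auto intro!: add_nonneg_nonneg exp_pe_nonneg)

lemma ee_pos: "allnn fs \<Longrightarrow> 0 \<le> t \<Longrightarrow> (k,p) \<in> set fs \<Longrightarrow> 0 < pe p 0 \<Longrightarrow> 0 < ee fs t"
proof (induction fs)
  case Nil then show ?case by simp
next
  case (Cons a fs)
  obtain k' p' where ap: "a = (k',p')" by (cases a)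
  have nn: "allnn fs" "list_all (\<lambda>c. 0 \<le> c) p'" using Cons(2) ap by (auto simp: allnn_def)
  have a: "0 \<le> ee fs t" using ee_nonneg nn Cons by blast
  have b: "0 \<le> exp (k'*t) * pe p' t" using pe_nonneg nn Cons by auto
  show ?case
  proof (cases "(k,p) = (k',p')")
    case True
    then have "0 < pe p' t" using pe_ge0[OF nn(2) Cons(3)] Cons(5) by auto
    then have "0 < exp (k'*t) * pe p' t" by simp
    then show ?thesis using a ap by simp
  next
    case False
    then have "0 < ee fs t" using Cons nn ap by auto
    then show ?thesis using b ap by simp
  qed
qed

datatype step = Dv | Sh real

fun chk :: "step list \<Rightarrow> ep \<Rightarrow> bool" where
  "chk [] f = (allnn f \<and> (\<exists>(k,p)\<in>set f. 0 < pe p 0))"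
| "chk (Dv#s) f = (0 \<le> ee f 0 \<and> chk s (ed f))"
| "chk (Sh c#s) f = chk s (sh c f)"

lemma pos_from_deriv:
  assumes "0 \<le> ee f 0" "\<And>t. 0 < t \<Longrightarrow> 0 < ee (ed f) t" "0 < t"
  shows "0 < ee f t"
proof -
  have "ee f 0 < ee f t"
  proof (rule DERIV_pos_imp_increasing_open[OF assms(3)])
    show "\<And>x. 0 < x \<Longrightarrow> x < t \<Longrightarrow> \<exists>y. (ee f has_real_derivative y) (at x) \<and> 0 < y"
      using ee_deriv assms(2) by blast
    show "continuous_on {0..t} (ee f)"
      by (meson DERIV_isCont continuous_at_imp_continuous_on ee_deriv)
  qed
  then show ?thesis using assms(1) by simp
qed

lemma chk_sound: "chk s f \<Longrightarrow> 0 < t \<Longrightarrow> 0 < ee f t"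
proof (induction s f arbitrary: t rule: chk.induct)
  case (1 f)
  then show ?case using ee_pos[of f t] by auto
next
  case (2 s f)
  then show ?case using pos_from_deriv[of f t] by auto
next
  case (3 c s f)
  then have "0 < ee (sh c f) t" by simp
  then show ?case by (simp add: zero_less_mult_iff)
qed

definition "Nl = [(2::real,[-86,54,-12,1::real]), (1,[160,-16,12,-1]), (0,[-74,-26])]"
definition "Dl = [(1::real,[1::real]),(0,[-1])]"
definition "Ql = [(2::real,[2::real]),(1,[-18,6,-1]),(0,[16,8])]"
definition "DQl = norm (emul Dl Ql)"
definition "Wl = norm (emul Nl (ed DQl) @ eneg (emul (ed Nl) DQl))"

lemma Q_ee: "Q t = ee Ql t"
  by (simp add: Q_def Ql_def power2_eq_square algebra_simps)

lemma N_ee: "P t = ee Nl t / (exp t - 1)"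
  by (simp add: P_def Nl_def power2_eq_square power3_eq_cube algebra_simps)

lemma DQ_ee: "ee DQl t = (exp t - 1) * Q t"
  by (simp add: DQl_def Q_ee Dl_def algebra_simps)

lemma Q_chk: "chk [Dv,Dv,Dv,Dv,Sh 2,Dv] Ql"
  by (simp add: Ql_def psc_def sh_def allnn_def)

lemma W_chk: "chk [Dv,Dv,Sh 1,Dv,Dv,Dv,Dv,Dv,Sh 1,Dv,Dv,Dv,Dv,Dv,Dv,Dv,Dv,Dv,Dv,Dv,Dv,Dv,Sh 2,Dv] Wl"
  by (simp add: Wl_def DQl_def Nl_def Dl_def Ql_def emul1_def eneg_def psc_def sh_def allnn_def)

lemma Q_pos: "0 < t \<Longrightarrow> 0 < Q t"
  using chk_sound[OF Q_chk] Q_ee by simp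

lemma W_pos: "0 < t \<Longrightarrow> 0 < ee Wl t"
  using chk_sound[OF W_chk] by simp

lemma DQ_pos: "0 < t \<Longrightarrow> 0 < ee DQl t"
  using Q_pos DQ_ee by simp

lemma PQ_ee: "0 < t \<Longrightarrow> P t / Q t = ee Nl t / ee DQl t"
  using Q_pos[of t] by (simp add: N_ee DQ_ee)

lemma g_deriv: "0 < t \<Longrightarrow> ((\<lambda>t. ee Nl t / ee DQl t) has_real_derivative - ee Wl t / (ee DQl t)^2) (at t)"
proof -
  assume t: "0 < t"
  have "((\<lambda>t. ee Nl t / ee DQl t) has_real_derivative
     (ee (ed Nl) t * ee DQl t - ee Nl t * ee (ed DQl) t) / (ee DQl t * ee DQl t)) (at t)"
    by (rule DERIV_divide[OF ee_deriv ee_deriv]) (use DQ_pos[OF t] in simp)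
  moreover have "ee Wl t = ee Nl t * ee (ed DQl) t - ee (ed Nl) t * ee DQl t"
    by (simp add: Wl_def)
  then have "ee (ed Nl) t * ee DQl t - ee Nl t * ee (ed DQl) t = - ee Wl t" by simp
  ultimately show ?thesis by (simp add: power2_eq_square)
qed

theorem mainTheorem6:
  shows "(\<forall>t>0. Q t > 0)
    \<and> strict_antimono_on {0<..} (\<lambda>t. P t / Q t)
    \<and> ((\<lambda>t. P t / Q t) \<longlongrightarrow> 1) (at_right 0)
    \<and> ((\<lambda>t. P t / Q t) \<longlongrightarrow> 0) at_top"
proof (intro conjI)
  show "\<forall>t>0. Q t > 0" using Q_pos by blast
  show "strict_antimono_on {0<..} (\<lambda>t. P t / Q t)"
  proof (rule monotone_onI)
    fix x y :: real assume xy: "x \<in> {0<..}" "y \<in> {0<..}" "x < y"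
    have "ee Nl x / ee DQl x > ee Nl y / ee DQl y"
    proof (rule DERIV_neg_imp_decreasing[OF xy(3)])
      fix z assume "x \<le> z" "z \<le> y"
      then have z: "0 < z" using xy by auto
      show "\<exists>d. ((\<lambda>t. ee Nl t / ee DQl t) has_real_derivative d) (at z) \<and> d < 0"
        using g_deriv[OF z] W_pos[OF z] DQ_pos[OF z] by (intro exI conjI) auto
    qed
    then show "P y / Q y < P x / Q x" using xy PQ_ee by auto
  qed
  show "((\<lambda>t. P t / Q t) \<longlongrightarrow> 1) (at_right 0)"
    unfolding P_def Q_def by real_asymp
  show "((\<lambda>t. P t / Q t) \<longlongrightarrow> 0) at_top"
    unfolding P_def Q_def by real_asymp
qed

end
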